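(* For all $x,y\ge 1$ and $n>\max(x,y)$, the minimum possible number of edges in any task-dependency graph produced by the $(x,y)$ edge-removal process on $n$ vertices is $n-\min(x,y)$.
   Context: A task-dependency graph is a finite directed acyclic graph (no loops, no multiple edges). A vertex is initial if it has in-degree $0$ and terminal if it has out-degree $0$ (an isolated vertex is both). The $(x,y)$ edge-removal process on $n$ vertices: start with the task-dependency graph on $\{1,\dots,n\}$ having all edges $(a,b)$ with $a<b$. Edges are removed uniformly at random, one at a time; a removal that would cause more than $x$ initial vertices or more than $y$ terminal vertices is cancelled. The process terminates when no further edge can be removed; the produced graph is the final graph (over all possible runs). *)

theory Defs
  imports Main
begin

text \<open>A task-dependency graph on vertex set {1..n} is represented by its edge set,
  a set of pairs (a,b) meaning an edge a -> b.\<close>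

definition complete_dag :: "nat \<Rightarrow> (nat \<times> nat) set" where
  "complete_dag n = {(a, b). 1 \<le> a \<and> a < b \<and> b \<le> n}"

definition initial_vertices :: "nat \<Rightarrow> (nat \<times> nat) set \<Rightarrow> nat set" where
  "initial_vertices n E = {v \<in> {1..n}. \<not> (\<exists>u. (u, v) \<in> E)}"

definition terminal_vertices :: "nat \<Rightarrow> (nat \<times> nat) set \<Rightarrow> nat set" where
  "terminal_vertices n E = {v \<in> {1..n}. \<not> (\<exists>w. (v, w) \<in> E)}"

definition admissible :: "nat \<Rightarrow> nat \<Rightarrow> nat \<Rightarrow> (nat \<times> nat) set \<Rightarrow> bool" where
  "admissible x y n E \<longleftrightarrow> card (initial_vertices n E) \<le> x \<and> card (terminal_vertices n E) \<le> y"

text \<open>One (non-cancelled) step of the (x,y) edge-removal process.\<close>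
definition removal_step :: "nat \<Rightarrow> nat \<Rightarrow> nat \<Rightarrow> (nat \<times> nat) set \<Rightarrow> (nat \<times> nat) set \<Rightarrow> bool" where
  "removal_step x y n E E' \<longleftrightarrow> (\<exists>e \<in> E. E' = E - {e} \<and> admissible x y n E')"

definition final_graph :: "nat \<Rightarrow> nat \<Rightarrow> nat \<Rightarrow> (nat \<times> nat) set \<Rightarrow> bool" where
  "final_graph x y n E \<longleftrightarrow>
     (removal_step x y n)\<^sup>*\<^sup>* (complete_dag n) E \<and> \<not> (\<exists>E'. removal_step x y n E E')"

end

theory Submission
  imports Defs
begin

definition Em :: "nat \<Rightarrow> nat \<Rightarrow> (nat \<times> nat) set" where
  "Em n m = {(a, b). 1 \<le> a \<and> b = a + m \<and> b \<le> n}"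

lemma init_anti: "E \<subseteq> F \<Longrightarrow> initial_vertices n F \<subseteq> initial_vertices n E"
  unfolding initial_vertices_def by auto

lemma term_anti: "E \<subseteq> F \<Longrightarrow> terminal_vertices n F \<subseteq> terminal_vertices n E"
  unfolding terminal_vertices_def by auto

lemma init_fin: "finite (initial_vertices n E)"
  unfolding initial_vertices_def by auto

lemma term_fin: "finite (terminal_vertices n E)"
  unfolding terminal_vertices_def by auto

lemma adm_mono: "admissible x y n E \<Longrightarrow> E \<subseteq> F \<Longrightarrow> admissible x y n F"
  unfolding admissible_def
  by (meson card_mono init_anti init_fin le_trans term_anti term_fin)

lemma complete_adm:
  assumes "x \<ge> 1" "y \<ge> 1"
  shows "admissible x y n (complete_dag n)"
proof -
  have "initial_vertices n (complete_dag n) \<subseteq> {1}"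
    unfolding initial_vertices_def complete_dag_def by force
  hence a: "card (initial_vertices n (complete_dag n)) \<le> 1"
    by (metis card_mono finite.emptyI finite.insertI card.insert card.empty empty_iff One_nat_def)
  have "terminal_vertices n (complete_dag n) \<subseteq> {n}"
    unfolding terminal_vertices_def complete_dag_def by force
  hence b: "card (terminal_vertices n (complete_dag n)) \<le> 1"
    by (metis card_mono finite.emptyI finite.insertI card.insert card.empty empty_iff One_nat_def)
  show ?thesis using a b assms unfolding admissible_def by simp
qed

lemma reach_inv:
  assumes "(removal_step x y n)\<^sup>*\<^sup>* (complete_dag n) E" "x \<ge> 1" "y \<ge> 1"
  shows "E \<subseteq> complete_dag n \<and> admissible x y n E"
  using assms(1)
proof (induction rule: rtranclp_induct)
  case base
  then show ?case using complete_adm assms by auto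
next
  case (step E1 E2)
  then show ?case unfolding removal_step_def by auto
qed

lemma fin_cd: "finite (complete_dag n)"
proof -
  have "complete_dag n \<subseteq> {1..n} \<times> {1..n}" unfolding complete_dag_def by auto
  thus ?thesis by (rule finite_subset) auto
qed

lemma lower_init:
  assumes "E \<subseteq> complete_dag n"
  shows "n - card (initial_vertices n E) \<le> card E"
proof -
  have fE: "finite E" using assms fin_cd finite_subset by blast
  have "{1..n} - initial_vertices n E \<subseteq> snd ` E"
    unfolding initial_vertices_def by force
  hence "card ({1..n} - initial_vertices n E) \<le> card E"
    by (meson card_image_le card_mono fE finite_imageI le_trans)
  moreover have "card ({1..n} - initial_vertices n E) = n - card (initial_vertices n E)"
    by (subst card_Diff_subset) (auto simp: initial_vertices_def init_fin)
  ultimately show ?thesis by simp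
qed

lemma lower_term:
  assumes "E \<subseteq> complete_dag n"
  shows "n - card (terminal_vertices n E) \<le> card E"
proof -
  have fE: "finite E" using assms fin_cd finite_subset by blast
  have "{1..n} - terminal_vertices n E \<subseteq> fst ` E"
    unfolding terminal_vertices_def by force
  hence "card ({1..n} - terminal_vertices n E) \<le> card E"
    by (meson card_image_le card_mono fE finite_imageI le_trans)
  moreover have "card ({1..n} - terminal_vertices n E) = n - card (terminal_vertices n E)"
    by (subst card_Diff_subset) (auto simp: terminal_vertices_def term_fin)
  ultimately show ?thesis by simp
qed

lemma Em_sub: "m \<ge> 1 \<Longrightarrow> Em n m \<subseteq> complete_dag n"
  unfolding Em_def complete_dag_def by auto

lemma Em_card: "card (Em n m) = n - m"
proof -
  have "Em n m = (\<lambda>a. (a, a + m)) ` {1..n-m}"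
    unfolding Em_def by (auto simp: image_def)
  moreover have "inj_on (\<lambda>a. (a, a + m)) {1..n-m}" by (auto simp: inj_on_def)
  ultimately show ?thesis by (simp add: card_image)
qed

lemma Em_init: "m \<ge> 1 \<Longrightarrow> m < n \<Longrightarrow> initial_vertices n (Em n m) = {1..m}"
proof (rule set_eqI)
  fix v assume m: "m \<ge> 1" "m < n"
  show "v \<in> initial_vertices n (Em n m) \<longleftrightarrow> v \<in> {1..m}"
  proof
    assume "v \<in> initial_vertices n (Em n m)"
    hence v: "1 \<le> v" "v \<le> n" "\<And>u. (u, v) \<notin> Em n m" unfolding initial_vertices_def by auto
    show "v \<in> {1..m}"
    proof (rule ccontr)
      assume "v \<notin> {1..m}"
      hence "(v - m, v) \<in> Em n m" using v(1,2) unfolding Em_def by auto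
      thus False using v(3) by blast
    qed
  next
    assume "v \<in> {1..m}"
    thus "v \<in> initial_vertices n (Em n m)" using m unfolding initial_vertices_def Em_def by auto
  qed
qed

lemma Em_term: "m \<ge> 1 \<Longrightarrow> m < n \<Longrightarrow> terminal_vertices n (Em n m) = {n-m+1..n}"
proof (rule set_eqI)
  fix v assume m: "m \<ge> 1" "m < n"
  show "v \<in> terminal_vertices n (Em n m) \<longleftrightarrow> v \<in> {n-m+1..n}"
  proof
    assume "v \<in> terminal_vertices n (Em n m)"
    hence v: "1 \<le> v" "v \<le> n" "\<And>u. (v, u) \<notin> Em n m" unfolding terminal_vertices_def by auto
    show "v \<in> {n-m+1..n}"
    proof (rule ccontr)
      assume "v \<notin> {n-m+1..n}"
      hence "(v, v + m) \<in> Em n m" using v(1,2) unfolding Em_def by auto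
      thus False using v(3) by blast
    qed
  next
    assume "v \<in> {n-m+1..n}"
    thus "v \<in> terminal_vertices n (Em n m)" using m unfolding terminal_vertices_def Em_def by auto
  qed
qed

lemma Em_adm: "m \<ge> 1 \<Longrightarrow> m < n \<Longrightarrow> m \<le> x \<Longrightarrow> m \<le> y \<Longrightarrow> admissible x y n (Em n m)"
  unfolding admissible_def using Em_init Em_term by auto

lemma reach_down:
  assumes "admissible x y n G"
  shows "finite F \<Longrightarrow> G \<subseteq> F \<Longrightarrow> (removal_step x y n)\<^sup>*\<^sup>* F G"
proof (induction "card (F - G)" arbitrary: F)
  case 0
  then have "F = G" by auto
  then show ?case by simp
next
  case (Suc k)
  then obtain e where e: "e \<in> F - G" by (metis card.empty all_not_in_conv nat.distinct(1))
  have "card ((F - {e}) - G) = k" using Suc e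
  proof -
    have "(F - {e}) - G = (F - G) - {e}" by auto
    thus ?thesis using Suc e by (simp add: card_Diff_singleton)
  qed
  hence "(removal_step x y n)\<^sup>*\<^sup>* (F - {e}) G" using Suc e by auto
  moreover have "removal_step x y n F (F - {e})"
    unfolding removal_step_def using e adm_mono[OF assms, of "F - {e}"] Suc.prems by blast
  ultimately show ?case by (meson converse_rtranclp_into_rtranclp)
qed

theorem mainTheorem6:
  fixes x y n :: nat
  assumes "x \<ge> 1" and "y \<ge> 1" and "n > max x y"
  shows "(\<exists>E. final_graph x y n E \<and> card E = n - min x y) \<and>
         (\<forall>E. final_graph x y n E \<longrightarrow> n - min x y \<le> card E)"
proof
  define m where "m = min x y"
  have m1: "m \<ge> 1" "m < n" "m \<le> x" "m \<le> y" using assms by (auto simp: m_def)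
  have adm: "admissible x y n (Em n m)" using Em_adm m1 by auto
  have reach: "(removal_step x y n)\<^sup>*\<^sup>* (complete_dag n) (Em n m)"
    using reach_down[OF adm] fin_cd Em_sub m1 by auto
  have nostep: "\<not> removal_step x y n (Em n m) E'" for E'
  proof
    assume "removal_step x y n (Em n m) E'"
    then obtain e where e: "e \<in> Em n m" "E' = Em n m - {e}" and ad: "admissible x y n E'"
      unfolding removal_step_def by auto
    obtain a where a: "e = (a, a + m)" "1 \<le> a" "a + m \<le> n" using e unfolding Em_def by auto
    have i: "insert (a + m) {1..m} \<subseteq> initial_vertices n E'"
      using Em_init[OF m1(1,2)] init_anti[of E' "Em n m" n] e a
      unfolding initial_vertices_def Em_def by auto
    have "card (insert (a + m) {1..m}) = m + 1" using a by simp
    hence ci: "m + 1 \<le> card (initial_vertices n E')" using i card_mono init_fin by metis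
    have t: "insert a {n-m+1..n} \<subseteq> terminal_vertices n E'"
      using Em_term[OF m1(1,2)] term_anti[of E' "Em n m" n] e a
      unfolding terminal_vertices_def Em_def by auto
    have "card (insert a {n-m+1..n}) = m + 1" using a m1 by simp
    hence ct: "m + 1 \<le> card (terminal_vertices n E')" using t card_mono term_fin by metis
    show False using ci ct ad unfolding admissible_def m_def by auto
  qed
  show "\<exists>E. final_graph x y n E \<and> card E = n - min x y"
    using reach nostep Em_card unfolding final_graph_def m_def by blast
next
  show "\<forall>E. final_graph x y n E \<longrightarrow> n - min x y \<le> card E"
  proof (intro allI impI)
    fix E assume "final_graph x y n E"
    hence "(removal_step x y n)\<^sup>*\<^sup>* (complete_dag n) E" unfolding final_graph_def by blast
    hence "E \<subseteq> complete_dag n" "admissible x y n E"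
      using reach_inv assms by blast+
    hence i: "n - x \<le> card E" and t: "n - y \<le> card E"
      using lower_init[of E n] lower_term[of E n] unfolding admissible_def by linarith+
    show "n - min x y \<le> card E"
    proof (cases "x \<le> y")
      case True thus ?thesis using i by (simp add: min_def)
    next
      case False thus ?thesis using t by (simp add: min_def)
    qed
  qed
qed

end
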